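(* Let $A\in\mathbb{R}^{m\times n}$, let $A^\dagger\in\mathbb{R}^{n\times m}$ be its Moore–Penrose pseudoinverse, and let $\|\cdot\|$ denote the Frobenius norm. (i) The problem $\min_{X\in\mathbb{R}^{n\times m}} \tfrac12\|X\|^2$ subject to $A^\top = A^\top A X$ is equivalent to (has the same $X$-solution as) the problem $\min_{X,\Gamma}\tfrac12\|X-A^\dagger\|^2$ subject to $X = A^\top A\Gamma$. (ii) For any $X_k\in\mathbb{R}^{n\times m}$ and any $S\in\mathbb{R}^{m\times\tau}$ ($\tau$ any positive integer), the problem $$X_{k+1} = \arg\min_X \tfrac12\|X-X_k\|^2 \quad\text{subject to}\quad S^\top A^\top = S^\top A^\top A X$$ is equivalent to (has the same $X$-solution as) the problem $\min_{X,\Gamma}\tfrac12\|X-A^\dagger\|^2$ subject to $X = X_k + A^\top A S\Gamma$. (iii) The solution of the problem in (ii) is given explicitly by $$X_{k+1} = X_k - A^\top A S\,(S^\top A^\top A A^\top A S)^\dagger S^\top A^\top (A X_k - I).$$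
   Context: For a real matrix $M$, $M^\dagger$ denotes its Moore–Penrose pseudoinverse. The Frobenius inner product is $\langle X,Y\rangle=\mathrm{Tr}(X^\top Y)$ and $\|X\|=\sqrt{\mathrm{Tr}(X^\top X)}$. *)

theory Defs
  imports "HOL-Analysis.Analysis"
begin

definition frob_norm :: "real^'n^'m \<Rightarrow> real" where
  "frob_norm X = sqrt (trace (transpose X ** X))"

definition is_mp_pinv :: "real^'n^'m \<Rightarrow> real^'m^'n \<Rightarrow> bool" where
  "is_mp_pinv A X \<longleftrightarrow> A ** X ** A = A \<and> X ** A ** X = X \<and>
     transpose (A ** X) = A ** X \<and> transpose (X ** A) = X ** A"

definition pinv :: "real^'n^'m \<Rightarrow> real^'m^'n" where
  "pinv A = (THE X. is_mp_pinv A X)"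

end

theory Submission
  imports Defs
begin


lemma frob_norm_eq: "frob_norm (X::real^'n^'m) = norm X"
proof -
  have "trace (transpose X ** X) = X \<bullet> X"
    unfolding trace_def inner_vec_def matrix_matrix_mult_def transpose_def
    apply simp apply (subst sum.swap) by simp
  then show ?thesis by (simp add: frob_norm_def norm_eq_sqrt_inner)
qed

lemma inner_mm: "((B::real^'k^'m) ** (X::real^'n^'k)) \<bullet> Y = X \<bullet> (transpose B ** Y)"
proof -
  have "((B::real^'k^'m) ** (X::real^'n^'k)) \<bullet> Y = (\<Sum>i\<in>UNIV. \<Sum>k\<in>UNIV. \<Sum>j\<in>UNIV. B$i$j * X$j$k * Y$i$k)"
    unfolding inner_vec_def matrix_matrix_mult_def
    by (simp add: sum_distrib_left sum_distrib_right)
  also have "\<dots> = (\<Sum>i\<in>UNIV. \<Sum>j\<in>UNIV. \<Sum>k\<in>UNIV. B$i$j * X$j$k * Y$i$k)"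
    by (rule sum.cong[OF refl], rule sum.swap)
  also have "\<dots> = (\<Sum>j\<in>UNIV. \<Sum>i\<in>UNIV. \<Sum>k\<in>UNIV. B$i$j * X$j$k * Y$i$k)"
    by (rule sum.swap)
  also have "\<dots> = (\<Sum>j\<in>UNIV. \<Sum>k\<in>UNIV. \<Sum>i\<in>UNIV. B$i$j * X$j$k * Y$i$k)"
    by (rule sum.cong[OF refl], rule sum.swap)
  also have "\<dots> = X \<bullet> (transpose B ** Y)"
    unfolding inner_vec_def matrix_matrix_mult_def transpose_def
    by (simp add: sum_distrib_left mult_ac)
  finally show ?thesis .
qed

lemma inner_mv: "((B::real^'k^'m) *v x) \<bullet> y = x \<bullet> (transpose B *v y)"
  unfolding inner_vec_def matrix_vector_mult_def transpose_def
  apply (simp add: sum_distrib_left sum_distrib_right)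
  apply (subst sum.swap) apply (rule sum.cong, simp)
  by (simp add: mult_ac)


lemma normal_solvable:
  fixes A :: "real^'n^'m" shows "\<exists>x. (transpose A ** A) *v x = transpose A *v y"
proof -
  let ?S = "range (\<lambda>x. (transpose A ** A) *v x)"
  have sub: "subspace ?S"
    by (metis linear_subspace_image matrix_vector_mul_linear subspace_UNIV)
  obtain p z where p: "p \<in> span ?S" and z: "\<And>w. w \<in> span ?S \<Longrightarrow> orthogonal z w"
     and pz: "transpose A *v y = p + z"
    using orthogonal_subspace_decomp_exists by blast
  have "p \<in> ?S" using p sub by (metis span_eq_iff)
  then obtain x where px: "p = (transpose A ** A) *v x" by blast
  have zz: "z = transpose A *v (y - A *v x)"
    using pz px by (simp add: matrix_vector_mult_diff_distrib matrix_vector_mul_assoc[symmetric] algebra_simps)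
  have "orthogonal z ((transpose A ** A) *v z)" by (rule z) (auto intro: span_base)
  hence "z \<bullet> (transpose A *v (A *v z)) = 0"
    by (simp add: orthogonal_def matrix_vector_mul_assoc)
  hence "(A *v z) \<bullet> (A *v z) = 0"
    using inner_mv[of "transpose A" "A *v z" z] by (simp add: inner_commute)
  hence Az: "A *v z = 0" by simp
  have "z \<bullet> z = 0" using inner_mv[of "transpose A" "y - A *v x" z] zz Az by simp
  hence "z = 0" by simp
  with pz px show ?thesis by auto
qed

lemma normal_solvable_mat:
  fixes A :: "real^'n^'m" shows "\<exists>G::real^'m^'n. transpose A ** A ** G = transpose A"
proof -
  have "\<forall>i. \<exists>x. (transpose A ** A) *v x = transpose A *v axis i 1"
    using normal_solvable by blast
  then obtain f where f: "\<And>i. (transpose A ** A) *v f i = transpose A *v axis i 1" by metis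
  define G :: "real^'m^'n" where "G = (\<chi> j i. f i $ j)"
  have "transpose A ** A ** G = transpose A"
  proof (subst vec_eq_iff, intro allI, subst vec_eq_iff, intro allI)
    fix r c
    have "(transpose A ** A ** G) $ r $ c = ((transpose A ** A) *v f c) $ r"
      unfolding G_def matrix_matrix_mult_def matrix_vector_mult_def by simp
    also have "\<dots> = (transpose A *v axis c 1) $ r" by (simp add: f)
    also have "\<dots> = transpose A $ r $ c"
      by (simp add: matrix_vector_mult_def axis_def if_distrib cong: if_cong)
    finally show "(transpose A ** A ** G) $ r $ c = transpose A $ r $ c" .
  qed
  thus ?thesis by blast
qed


lemma mm_diff_l: "(A::real^'k^'m) ** (B - C) = A ** B - A ** C"
  by (simp add: vec_eq_iff matrix_matrix_mult_def sum_subtractf algebra_simps)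
lemma mm_diff_r: "((B::real^'k^'m) - C) ** A = B ** A - C ** A"
  by (simp add: vec_eq_iff matrix_matrix_mult_def sum_subtractf algebra_simps)
lemma mm_add_r: "((B::real^'k^'m) + C) ** A = B ** A + C ** A"
  by (simp add: vec_eq_iff matrix_matrix_mult_def sum.distrib algebra_simps)
lemma mm_uminus_r: "(- (B::real^'k^'m)) ** A = - (B ** A)"
  by (simp add: vec_eq_iff matrix_matrix_mult_def sum_negf)
lemma mm_uminus_l: "(A::real^'k^'m) ** (- B) = - (A ** B)"
  by (simp add: vec_eq_iff matrix_matrix_mult_def sum_negf)
lemma mm_zero_r: "(A::real^'k^'m) ** (0::real^'n^'k) = 0"
  by (simp add: vec_eq_iff matrix_matrix_mult_def)
lemma transpose_diff: "transpose ((A::real^'k^'m) - B) = transpose A - transpose B"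
  by (simp add: vec_eq_iff transpose_def)

lemma zero_if_self_inner: "(E::real^'n^'m) = M ** Z \<Longrightarrow> transpose M ** E = 0 \<Longrightarrow> E = 0"
proof -
  assume e: "E = M ** Z" and m: "transpose M ** E = 0"
  have "E \<bullet> E = Z \<bullet> (transpose M ** E)" using inner_mm[of M Z E] e by simp
  also have "\<dots> = 0" using m by simp
  finally show "E = 0" by simp
qed

lemma mp_exists: fixes A :: "real^'n^'m" shows "\<exists>X. is_mp_pinv A X"
proof -
  obtain G :: "real^'m^'n" where G: "transpose A ** A ** G = transpose A"
    using normal_solvable_mat by blast
  obtain H :: "real^'n^'m" where H: "A ** transpose A ** H = A"
    using normal_solvable_mat[of "transpose A"] by auto
  define P where "P = A ** G"
  define Q where "Q = transpose A ** H"
  have GT: "transpose G ** transpose A ** A = A"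
    using arg_cong[OF G, of transpose] by (simp add: matrix_transpose_mul matrix_mul_assoc)
  have HT: "transpose H ** A ** transpose A = transpose A"
    using arg_cong[OF H, of transpose] by (simp add: matrix_transpose_mul matrix_mul_assoc)
  have PP: "transpose P ** P = P"
    unfolding P_def by (simp add: matrix_transpose_mul matrix_mul_assoc GT)
  have Psym: "transpose P = P"
    proof -
    have "transpose P = transpose (transpose P ** P)" using PP by simp
    also have "\<dots> = transpose P ** P" by (simp add: matrix_transpose_mul)
    finally show ?thesis using PP by simp
  qed
  have QQ: "transpose Q ** Q = Q"
    unfolding Q_def by (simp add: matrix_transpose_mul matrix_mul_assoc HT)
  have Qsym: "transpose Q = Q"
    proof -
    have "transpose Q = transpose (transpose Q ** Q)" using QQ by simp
    also have "\<dots> = transpose Q ** Q" by (simp add: matrix_transpose_mul)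
    finally show ?thesis using QQ by simp
  qed
  have AQ: "A ** Q = A" unfolding Q_def using H by (simp add: matrix_mul_assoc)
  have PA: "P ** A = A"
  proof -
    have "P ** A = transpose P ** A" by (simp add: Psym)
    also have "\<dots> = A" unfolding P_def by (simp add: matrix_transpose_mul GT matrix_mul_assoc)
    finally show ?thesis .
  qed
  define X where "X = Q ** G"
  have AX: "A ** X = P" unfolding X_def P_def by (simp add: matrix_mul_assoc AQ)
  have XA: "X ** A = Q"
  proof -
    define D where "D = X ** A - Q"
    have D1: "D = transpose A ** (H ** G ** A - H)"
      unfolding D_def X_def Q_def by (simp add: mm_diff_l matrix_mul_assoc)
    have "A ** D = 0"
      unfolding D_def mm_diff_l by (simp add: matrix_mul_assoc[symmetric] AX PA AQ)
      (simp add: matrix_mul_assoc AX PA AQ)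
    hence "D = 0" using zero_if_self_inner[OF D1] by simp
    thus ?thesis unfolding D_def by simp
  qed
  have "A ** X ** A = A" by (simp add: AX PA)
  moreover have "X ** A ** X = X"
  proof -
    have "X ** A ** X = Q ** X" by (simp add: XA)
    also have "\<dots> = Q ** Q ** G" by (simp add: X_def matrix_mul_assoc)
    also have "Q ** Q = Q" using QQ Qsym by simp
    finally show ?thesis by (simp add: X_def)
  qed
  ultimately have "is_mp_pinv A X" unfolding is_mp_pinv_def using AX XA Psym Qsym by simp
  thus ?thesis by blast
qed

lemma mp_unique:
  assumes X: "is_mp_pinv (A::real^'n^'m) X" and Y: "is_mp_pinv A Y" shows "X = Y"
proof -
  from X have x1: "A ** X ** A = A" and x2: "X ** A ** X = X" and x3: "transpose (A ** X) = A ** X"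
    and x4: "transpose (X ** A) = X ** A" by (auto simp: is_mp_pinv_def)
  from Y have y1: "A ** Y ** A = A" and y2: "Y ** A ** Y = Y" and y3: "transpose (A ** Y) = A ** Y"
    and y4: "transpose (Y ** A) = Y ** A" by (auto simp: is_mp_pinv_def)
  have "X = X ** (A ** X)" using x2 by (simp add: matrix_mul_assoc)
  also have "\<dots> = X ** transpose (A ** X)" using x3 by simp
  also have "\<dots> = X ** transpose X ** transpose A" by (simp add: matrix_transpose_mul matrix_mul_assoc)
  also have "\<dots> = X ** transpose X ** transpose (A ** Y ** A)" using y1 by simp
  also have "\<dots> = X ** transpose (A ** X) ** transpose (A ** Y)"
    by (simp add: matrix_transpose_mul matrix_mul_assoc)
  also have "\<dots> = X ** A ** X ** A ** Y" using x3 y3 by (simp add: matrix_mul_assoc)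
  also have "\<dots> = X ** A ** Y" using x2 by simp
  finally have 1: "X = X ** A ** Y" .
  have "Y = (Y ** A) ** Y" using y2 by simp
  also have "\<dots> = transpose (Y ** A) ** Y" using y4 by simp
  also have "\<dots> = transpose A ** transpose Y ** Y" by (simp add: matrix_transpose_mul)
  also have "\<dots> = transpose (A ** X ** A) ** transpose Y ** Y" using x1 by simp
  also have "\<dots> = transpose (X ** A) ** transpose (Y ** A) ** Y"
    by (simp add: matrix_transpose_mul matrix_mul_assoc)
  also have "\<dots> = X ** A ** (Y ** A ** Y)" using x4 y4 by (simp add: matrix_mul_assoc)
  also have "\<dots> = X ** A ** Y" using y2 by simp
  finally show ?thesis using 1 by simp
qed

lemma pinv_mp: "is_mp_pinv (A::real^'n^'m) (pinv A)"
  unfolding pinv_def by (rule theI') (use mp_exists mp_unique in blast)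


lemma argmin1:
  fixes X0 C :: "'a::real_inner"
  assumes "P X0" and orth: "\<And>Y. P Y \<Longrightarrow> (X0 - C) \<bullet> (Y - X0) = 0"
  shows "{X. P X \<and> (\<forall>Y. P Y \<longrightarrow> (1/2) * (norm (X - C))^2 \<le> (1/2) * (norm (Y - C))^2)} = {X0}"
proof -
  have key: "(norm (Y - C))^2 = (norm (X0 - C))^2 + (norm (Y - X0))^2" if "P Y" for Y
  proof -
    have "Y - C = (X0 - C) + (Y - X0)" by simp
    thus ?thesis using norm_add_Pythagorean[of "X0 - C" "Y - X0"] orth[OF that] by (simp add: orthogonal_def)
  qed
  show ?thesis
  proof (intro equalityI subsetI)
    fix X assume "X \<in> {X. P X \<and> (\<forall>Y. P Y \<longrightarrow> (1/2) * (norm (X - C))^2 \<le> (1/2) * (norm (Y - C))^2)}"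
    hence "P X" and "(norm (X - C))^2 \<le> (norm (X0 - C))^2" using assms(1) by auto
    hence "(norm (X - X0))^2 \<le> 0" using key[of X] by simp
    hence "X - X0 = 0" by simp
    thus "X \<in> {X0}" by simp
  next
    fix X assume "X \<in> {X0}"
    thus "X \<in> {X. P X \<and> (\<forall>Y. P Y \<longrightarrow> (1/2) * (norm (X - C))^2 \<le> (1/2) * (norm (Y - C))^2)}"
    proof -
      have "X = X0" using \<open>X \<in> {X0}\<close> by simp
      moreover have "(1/2) * (norm (X0 - C))^2 \<le> (1/2) * (norm (Y - C))^2" if "P Y" for Y
        using key[OF that] by simp
      ultimately show ?thesis using assms(1) by simp
    qed
  qed
qed

lemma argmin2:
  fixes X0 C :: "'a::real_inner"
  assumes "X0 = f Gs" and orth: "\<And>G. (X0 - C) \<bullet> (f G - X0) = 0"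
  shows "{X. \<exists>G. X = f G \<and> (\<forall>Y G'. Y = f G' \<longrightarrow> (1/2) * (norm (X - C))^2 \<le> (1/2) * (norm (Y - C))^2)} = {X0}"
proof -
  have "{X. \<exists>G. X = f G \<and> (\<forall>Y G'. Y = f G' \<longrightarrow> (1/2) * (norm (X - C))^2 \<le> (1/2) * (norm (Y - C))^2)}
     = {X. (\<exists>G. X = f G) \<and> (\<forall>Y. (\<exists>G. Y = f G) \<longrightarrow> (1/2) * (norm (X - C))^2 \<le> (1/2) * (norm (Y - C))^2)}"
    by blast
  also have "\<dots> = {X0}"
  proof (rule argmin1)
    show "\<exists>G. X0 = f G" using assms(1) by blast
    fix Y assume "\<exists>G. Y = f G"
    then obtain G where "Y = f G" by blast
    thus "(X0 - C) \<bullet> (Y - X0) = 0" using orth by simp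
  qed
  finally show ?thesis .
qed

theorem theorem1:
  fixes A :: "real^'n^'m" and Xk :: "real^'m^'n" and S :: "real^'t^'n"
  shows
   "{X :: real^'m^'n. transpose A = transpose A ** A ** X \<and>
        (\<forall>Y. transpose A = transpose A ** A ** Y \<longrightarrow>
              (1/2) * (frob_norm X)^2 \<le> (1/2) * (frob_norm Y)^2)}
    = {X. \<exists>\<Gamma> :: real^'m^'n. X = transpose A ** A ** \<Gamma> \<and>
        (\<forall>Y (\<Gamma>' :: real^'m^'n). Y = transpose A ** A ** \<Gamma>' \<longrightarrow>
              (1/2) * (frob_norm (X - pinv A))^2 \<le> (1/2) * (frob_norm (Y - pinv A))^2)}
    \<and>
    {X :: real^'m^'n. transpose S ** transpose A = transpose S ** transpose A ** A ** X \<and>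
        (\<forall>Y. transpose S ** transpose A = transpose S ** transpose A ** A ** Y \<longrightarrow>
              (1/2) * (frob_norm (X - Xk))^2 \<le> (1/2) * (frob_norm (Y - Xk))^2)}
    = {X. \<exists>\<Gamma> :: real^'m^'t. X = Xk + transpose A ** A ** S ** \<Gamma> \<and>
        (\<forall>Y (\<Gamma>' :: real^'m^'t). Y = Xk + transpose A ** A ** S ** \<Gamma>' \<longrightarrow>
              (1/2) * (frob_norm (X - pinv A))^2 \<le> (1/2) * (frob_norm (Y - pinv A))^2)}
    \<and>
    {X :: real^'m^'n. transpose S ** transpose A = transpose S ** transpose A ** A ** X \<and>
        (\<forall>Y. transpose S ** transpose A = transpose S ** transpose A ** A ** Y \<longrightarrow>
              (1/2) * (frob_norm (X - Xk))^2 \<le> (1/2) * (frob_norm (Y - Xk))^2)}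
    = {Xk - transpose A ** A ** S **
             pinv (transpose S ** transpose A ** A ** transpose A ** A ** S) **
             transpose S ** transpose A ** (A ** Xk - mat 1)}"
proof -
  define Ad where "Ad = pinv A"
  have mp: "is_mp_pinv A Ad" unfolding Ad_def by (rule pinv_mp)
  hence a1: "A ** Ad ** A = A" and a2: "Ad ** A ** Ad = Ad" and a3: "transpose (A ** Ad) = A ** Ad"
    and a4: "transpose (Ad ** A) = Ad ** A" by (auto simp: is_mp_pinv_def)
  have T1: "transpose A ** A ** Ad = transpose A"
  proof -
    have "transpose A ** A ** Ad = transpose A ** transpose (A ** Ad)" using a3 by (simp add: matrix_mul_assoc)
    also have "\<dots> = transpose (A ** Ad ** A)" by (simp add: matrix_transpose_mul)
    finally show ?thesis using a1 by simp
  qed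
  define G0 where "G0 = Ad ** transpose Ad ** Ad"
  have AdG0: "Ad = transpose A ** A ** G0"
  proof -
    have "Ad = transpose (Ad ** A) ** Ad" using a2 a4 by simp
    also have "\<dots> = transpose A ** (transpose Ad ** Ad)" by (simp add: matrix_transpose_mul matrix_mul_assoc)
    also have "\<dots> = transpose A ** A ** Ad ** (transpose Ad ** Ad)" using T1 by simp
    finally show ?thesis unfolding G0_def by (simp add: matrix_mul_assoc)
  qed
  have symAA: "transpose (transpose A ** A) = transpose A ** A" by (simp add: matrix_transpose_mul)
  have P1: "{X :: real^'m^'n. transpose A = transpose A ** A ** X \<and>
        (\<forall>Y. transpose A = transpose A ** A ** Y \<longrightarrow>
              (1/2) * (norm (X - 0))^2 \<le> (1/2) * (norm (Y - 0))^2)} = {Ad}"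
  proof (rule argmin1)
    show "transpose A = transpose A ** A ** Ad" using T1 by simp
    fix Y assume Y: "transpose A = transpose A ** A ** Y"
    have "(Ad - 0) \<bullet> (Y - Ad) = G0 \<bullet> (transpose (transpose A ** A) ** (Y - Ad))"
      using inner_mm[of "transpose A ** A" G0 "Y - Ad"] AdG0 by simp
    also have "\<dots> = 0" unfolding symAA mm_diff_l using Y T1 by simp
    finally show "(Ad - 0) \<bullet> (Y - Ad) = 0" .
  qed
  have P2: "{X. \<exists>\<Gamma> :: real^'m^'n. X = transpose A ** A ** \<Gamma> \<and>
        (\<forall>Y (\<Gamma>' :: real^'m^'n). Y = transpose A ** A ** \<Gamma>' \<longrightarrow>
              (1/2) * (norm (X - Ad))^2 \<le> (1/2) * (norm (Y - Ad))^2)} = {Ad}"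
    by (rule argmin2[where Gs=G0]) (use AdG0 in auto)
  define M where "M = transpose A ** A ** S"
  define N where "N = transpose M ** M"
  define K where "K = pinv N"
  have MT: "transpose M = transpose S ** transpose A ** A"
    unfolding M_def by (simp add: matrix_transpose_mul matrix_mul_assoc)
  have mpK: "is_mp_pinv N K" unfolding K_def by (rule pinv_mp)
  hence k1: "N ** K ** N = N" and k2: "K ** N ** K = K" and k3: "transpose (N ** K) = N ** K"
    and k4: "transpose (K ** N) = K ** N" by (auto simp: is_mp_pinv_def)
  have Nsym: "transpose N = N" unfolding N_def by (simp add: matrix_transpose_mul)
  have "is_mp_pinv N (transpose K)"
  proof -
    have e1: "transpose (N ** K ** N) = N ** transpose K ** N"
      using Nsym by (simp add: matrix_transpose_mul matrix_mul_assoc)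
    have e2: "transpose (K ** N ** K) = transpose K ** N ** transpose K"
      using Nsym by (simp add: matrix_transpose_mul matrix_mul_assoc)
    have e3: "transpose (K ** N) = N ** transpose K"
      using Nsym by (simp add: matrix_transpose_mul)
    have e4: "transpose (N ** K) = transpose K ** N"
      using Nsym by (simp add: matrix_transpose_mul)
    have e5: "transpose (N ** transpose K) = K ** N"
      using Nsym by (simp add: matrix_transpose_mul)
    have e6: "transpose (transpose K ** N) = N ** K"
      using Nsym by (simp add: matrix_transpose_mul)
    show ?thesis unfolding is_mp_pinv_def
      using e1 e2 e3 e4 e5 e6 k1 k2 k3 k4 Nsym by simp
  qed
  hence Ksym: "transpose K = K" using mp_unique mpK by blast
  have MKN: "M ** K ** N = M"
  proof -
    define E where "E = M ** K ** N - M"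
    have E1: "E = M ** (K ** N - mat 1)" unfolding E_def by (simp add: mm_diff_l matrix_mul_assoc)
    have "transpose M ** E = 0"
      unfolding E_def mm_diff_l by (simp add: matrix_mul_assoc N_def[symmetric] k1)
    hence "E = 0" using zero_if_self_inner[OF E1] by simp
    thus ?thesis unfolding E_def by simp
  qed
  have MtW: "transpose M ** M ** K ** transpose M = transpose M"
    using arg_cong[OF MKN, of transpose] Nsym Ksym
    by (simp add: matrix_transpose_mul matrix_mul_assoc N_def)
  have MtAd: "transpose M ** Ad = transpose S ** transpose A"
    unfolding MT using T1 by (simp add: matrix_mul_assoc[symmetric])
  define \<Gamma>0 where "\<Gamma>0 = - (K ** transpose M ** (Xk - Ad))"
  define Z where "Z = Xk + M ** \<Gamma>0"
  have MtZ: "transpose M ** Z = transpose S ** transpose A"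
  proof -
    have "transpose M ** Z = transpose M ** Xk + transpose M ** M ** \<Gamma>0"
      unfolding Z_def by (simp add: matrix_add_ldistrib matrix_mul_assoc)
    also have "transpose M ** M ** \<Gamma>0 = - (transpose M ** M ** K ** transpose M ** (Xk - Ad))"
      unfolding \<Gamma>0_def by (simp add: mm_uminus_l matrix_mul_assoc)
    finally have "transpose M ** Z = transpose M ** Xk - transpose M ** M ** K ** transpose M ** (Xk - Ad)"
      by simp
    also have "\<dots> = transpose M ** Xk - transpose M ** (Xk - Ad)" using MtW by simp
    also have "\<dots> = transpose M ** Ad" by (simp add: mm_diff_l)
    finally show ?thesis using MtAd by simp
  qed
  have cons: "transpose S ** transpose A ** A ** Y = transpose M ** Y" for Y :: "real^'m^'n"
    unfolding MT ..
  have P3: "{X :: real^'m^'n. transpose S ** transpose A = transpose S ** transpose A ** A ** X \<and>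
        (\<forall>Y. transpose S ** transpose A = transpose S ** transpose A ** A ** Y \<longrightarrow>
              (1/2) * (norm (X - Xk))^2 \<le> (1/2) * (norm (Y - Xk))^2)} = {Z}"
  proof (rule argmin1)
    show "transpose S ** transpose A = transpose S ** transpose A ** A ** Z" using MtZ cons by simp
    fix Y assume Y: "transpose S ** transpose A = transpose S ** transpose A ** A ** Y"
    have "(Z - Xk) \<bullet> (Y - Z) = \<Gamma>0 \<bullet> (transpose M ** (Y - Z))"
      using inner_mm[of M \<Gamma>0 "Y - Z"] unfolding Z_def by simp
    also have "\<dots> = 0" unfolding mm_diff_l using Y MtZ cons by simp
    finally show "(Z - Xk) \<bullet> (Y - Z) = 0" .
  qed
  have P4: "{X. \<exists>\<Gamma> :: real^'m^'t. X = Xk + transpose A ** A ** S ** \<Gamma> \<and>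
        (\<forall>Y (\<Gamma>' :: real^'m^'t). Y = Xk + transpose A ** A ** S ** \<Gamma>' \<longrightarrow>
              (1/2) * (norm (X - Ad))^2 \<le> (1/2) * (norm (Y - Ad))^2)} = {Z}"
  proof (rule argmin2[where Gs=\<Gamma>0])
    show "Z = Xk + transpose A ** A ** S ** \<Gamma>0" unfolding Z_def M_def ..
    fix G :: "real^'m^'t"
    have "Xk + transpose A ** A ** S ** G - Z = M ** (G - \<Gamma>0)"
      unfolding Z_def M_def by (simp add: mm_diff_l)
    hence "(Z - Ad) \<bullet> (Xk + transpose A ** A ** S ** G - Z) = (G - \<Gamma>0) \<bullet> (transpose M ** (Z - Ad))"
      using inner_mm[of M "G - \<Gamma>0" "Z - Ad"] by (simp add: inner_commute)
    also have "\<dots> = 0" unfolding mm_diff_l using MtZ MtAd by simp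
    finally show "(Z - Ad) \<bullet> (Xk + transpose A ** A ** S ** G - Z) = 0" .
  qed
  have Nform: "transpose S ** transpose A ** A ** transpose A ** A ** S = N"
    unfolding N_def MT unfolding M_def by (simp add: matrix_mul_assoc)
  have Zform: "Xk - transpose A ** A ** S ** K ** transpose S ** transpose A ** (A ** Xk - mat 1) = Z"
  proof -
    have "transpose S ** transpose A ** (A ** Xk - mat 1) = transpose M ** (Xk - Ad)"
      unfolding mm_diff_l using MtAd by (simp add: MT matrix_mul_assoc)
    moreover have "transpose A ** A ** S ** K ** transpose S ** transpose A ** (A ** Xk - mat 1)
         = M ** K ** (transpose S ** transpose A ** (A ** Xk - mat 1))"
      unfolding M_def by (simp add: matrix_mul_assoc)
    ultimately have "transpose A ** A ** S ** K ** transpose S ** transpose A ** (A ** Xk - mat 1)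
         = M ** K ** (transpose M ** (Xk - Ad))" by simp
    thus ?thesis unfolding Z_def \<Gamma>0_def
      by (simp add: matrix_mul_assoc mm_uminus_l)
  qed
  show ?thesis
    unfolding frob_norm_eq Ad_def[symmetric] Nform K_def[symmetric] Zform
    using P1 P2 P3 P4 by simp
qed

end
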